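(* For every integer $l\ge1$, let $m=5l+3$, $L_1=[2l+1]$, $L_2=\{2l+2,\dots,4l+2\}$, $L_3=\{4l+3,\dots,5l+3\}$, and let $O_{L_s}$, $E_{L_s}$ be the sets of odd and even elements of $L_s$. Let $\mathcal{I}_7(l)$ be the instance on $[m]$ with $A_i=E_{L_1}\cup(L_2\setminus\{i+2l+1\})\cup L_3$ for $i\in O_{L_1}$; $A_i=O_{L_2}\cup(L_1\setminus\{i\})\cup L_3$ for $i\in E_{L_1}$; $A_i=O_{L_2}\cup(L_1\setminus\{i-(2l+1)\})\cup L_3$ for $i\in E_{L_2}$; $A_i=E_{L_1}\cup(L_2\setminus\{i\})\cup L_3$ for $i\in O_{L_2}$; $A_i=\{2(i-4l-2)-1,\ 2(i-3l-2)\}$ for $i\in L_3$. Then the UMCD algorithm on $\mathcal{I}_7(l)$ outputs $\beta_{\text{UMCD}}(\mathcal{I}_7(l))=l+2$.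
   Context: $B_i=[m]\setminus(A_i\cup\{i\})$. For a $0/1$ matrix $\boldsymbol{G}$ with columns indexed by $[m]$, $\boldsymbol{G}_{[k]}^L$ is the submatrix of the first $k$ rows and columns $L$; $\mathrm{mcm}(\boldsymbol{G})$ is the maximum number of $1$-entries no two in a common row or column (0 if no columns). UMCD algorithm: $N=[m]$, $k=0$; while $N\ne\emptyset$: $k\leftarrow k+1$; pick $w\in N$ minimizing $|A_w|$ over $N$ (arbitrary tie-breaking); row $k$ of $\boldsymbol{G}$ is the indicator vector of $\{w\}\cup A_w$; remove $w$ from $N$; remove every $i\in N$ with $\mathrm{mcm}(\boldsymbol{G}_{[k]}^{\{i\}\cup B_i})=\mathrm{mcm}(\boldsymbol{G}_{[k]}^{B_i})+1$; output $\beta_{\text{UMCD}}=k$. *)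

theory Defs
  imports Main
begin

text \<open>A 0/1 matrix with columns indexed by [m] is represented by the list of its rows,
  each row given as the set of column indices carrying a 1-entry.
  The submatrix of the first k rows is simply the list itself (rows are appended one by one).\<close>

definition mcm :: "nat set list \<Rightarrow> nat set \<Rightarrow> nat" where
  "mcm G L = Max {card M | M. M \<subseteq> {(r, c). r < length G \<and> c \<in> L \<and> c \<in> G ! r}
                              \<and> inj_on fst M \<and> inj_on snd M}"

definition Bset :: "nat \<Rightarrow> (nat \<Rightarrow> nat set) \<Rightarrow> nat \<Rightarrow> nat set" where
  "Bset m A i = {1..m} - (A i \<union> {i})"

text \<open>One iteration of the UMCD while-loop, from state (N, G) to state (N', G'),
  with arbitrary tie-breaking in the choice of w.\<close>
definition umcd_step :: "nat \<Rightarrow> (nat \<Rightarrow> nat set) \<Rightarrow> nat set \<times> nat set list \<Rightarrow> nat set \<times> nat set list \<Rightarrow> bool" where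
  "umcd_step m A s s' \<longleftrightarrow> (\<exists>N G w. s = (N, G) \<and> N \<noteq> {} \<and> w \<in> N \<and>
      (\<forall>v\<in>N. card (A w) \<le> card (A v)) \<and>
      s' = ({i \<in> N - {w}. mcm (G @ [insert w (A w)]) (insert i (Bset m A i))
                           \<noteq> mcm (G @ [insert w (A w)]) (Bset m A i) + 1},
            G @ [insert w (A w)]))"

definition umcd_output :: "nat \<Rightarrow> (nat \<Rightarrow> nat set) \<Rightarrow> nat \<Rightarrow> bool" where
  "umcd_output m A k \<longleftrightarrow> (\<exists>G. (umcd_step m A)\<^sup>*\<^sup>* ({1..m}, []) ({}, G) \<and> length G = k)"

definition I7 :: "nat \<Rightarrow> nat \<Rightarrow> nat set" where
  "I7 l i = (let L1 = {1..2*l+1}; L2 = {2*l+2..4*l+2}; L3 = {4*l+3..5*l+3};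
                 O1 = {x \<in> L1. odd x}; E1 = {x \<in> L1. even x};
                 O2 = {x \<in> L2. odd x}; E2 = {x \<in> L2. even x} in
     if i \<in> O1 then E1 \<union> (L2 - {i + 2*l + 1}) \<union> L3
     else if i \<in> E1 then O2 \<union> (L1 - {i}) \<union> L3
     else if i \<in> E2 then O2 \<union> (L1 - {i - (2*l + 1)}) \<union> L3
     else if i \<in> O2 then E1 \<union> (L2 - {i}) \<union> L3
     else if i \<in> L3 then {2*(i - 4*l - 2) - 1, 2*(i - 3*l - 2)}
     else {})"

end

theory Submission
  imports Defs
begin

lemma I7_O1: "1 \<le> i \<Longrightarrow> i \<le> 2*l+1 \<Longrightarrow> odd i \<Longrightarrow>
  I7 l i = {x\<in>{1..2*l+1}. even x} \<union> ({2*l+2..4*l+2} - {i + 2*l + 1}) \<union> {4*l+3..5*l+3}"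
  by (simp add: I7_def Let_def)
lemma I7_E1: "1 \<le> i \<Longrightarrow> i \<le> 2*l+1 \<Longrightarrow> even i \<Longrightarrow>
  I7 l i = {x\<in>{2*l+2..4*l+2}. odd x} \<union> ({1..2*l+1} - {i}) \<union> {4*l+3..5*l+3}"
  by (simp add: I7_def Let_def)
lemma I7_E2: "2*l+2 \<le> i \<Longrightarrow> i \<le> 4*l+2 \<Longrightarrow> even i \<Longrightarrow>
  I7 l i = {x\<in>{2*l+2..4*l+2}. odd x} \<union> ({1..2*l+1} - {i - (2*l+1)}) \<union> {4*l+3..5*l+3}"
  by (simp add: I7_def Let_def)
lemma I7_O2: "2*l+2 \<le> i \<Longrightarrow> i \<le> 4*l+2 \<Longrightarrow> odd i \<Longrightarrow>
  I7 l i = {x\<in>{1..2*l+1}. even x} \<union> ({2*l+2..4*l+2} - {i}) \<union> {4*l+3..5*l+3}"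
  by (simp add: I7_def Let_def)
lemma I7_L3: "4*l+3 \<le> i \<Longrightarrow> i \<le> 5*l+3 \<Longrightarrow>
  I7 l i = {2*(i - 4*l - 2) - 1, 2*(i - 3*l - 2)}"
  by (simp add: I7_def Let_def)

lemma I7_LL_cases:
  assumes "1 \<le> i" "i \<le> 4*l+2"
  obtains "i \<le> 2*l+1" "odd i" "I7 l i = {x\<in>{1..2*l+1}. even x} \<union> ({2*l+2..4*l+2} - {i + 2*l + 1}) \<union> {4*l+3..5*l+3}"
  | "i \<le> 2*l+1" "even i" "I7 l i = {x\<in>{2*l+2..4*l+2}. odd x} \<union> ({1..2*l+1} - {i}) \<union> {4*l+3..5*l+3}"
  | "2*l+2 \<le> i" "even i" "I7 l i = {x\<in>{2*l+2..4*l+2}. odd x} \<union> ({1..2*l+1} - {i - (2*l+1)}) \<union> {4*l+3..5*l+3}"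
  | "2*l+2 \<le> i" "odd i" "I7 l i = {x\<in>{1..2*l+1}. even x} \<union> ({2*l+2..4*l+2} - {i}) \<union> {4*l+3..5*l+3}"
proof (cases "i \<le> 2*l+1")
  case True
  show ?thesis
  proof (cases "even i")
    case e: True
    show ?thesis by (rule that(2)[OF True e I7_E1[OF assms(1) True e]])
  next
    case e: False
    show ?thesis by (rule that(1)[OF True e I7_O1[OF assms(1) True e]])
  qed
next
  case False
  then have F: "2*l+2 \<le> i" by simp
  show ?thesis
  proof (cases "even i")
    case e: True
    show ?thesis by (rule that(3)[OF F e I7_E2[OF F assms(2) e]])
  next
    case e: False
    show ?thesis by (rule that(4)[OF F e I7_O2[OF F assms(2) e]])
  qed
qed

definition "Bl l i = Bset (5*l+3) (I7 l) i"
definition "pj l u = 2*(u - 4*l - 2) - (1::nat)"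
definition "qj l u = 2*(u - 3*l - 2::nat)"



lemma match_card_le:
  assumes "M \<subseteq> {(r, c). r < length G \<and> c \<in> L \<and> c \<in> G ! r}" "inj_on fst M" "inj_on snd M"
  shows "card M \<le> length G" "finite L \<Longrightarrow> card M \<le> card L"
proof -
  have "card M = card (fst ` M)" using assms(2) by (simp add: card_image)
  also have "\<dots> \<le> card {..<length G}" by (rule card_mono) (use assms(1) in auto)
  finally show "card M \<le> length G" by simp
next
  assume fL: "finite L"
  have "card M = card (snd ` M)" using assms(3) by (simp add: card_image)
  also have "\<dots> \<le> card L" by (rule card_mono) (use assms(1) fL in auto)
  finally show "card M \<le> card L" .
qed

lemma mcm_set_finite:
  "finite {card M | M. M \<subseteq> {(r, c). r < length G \<and> c \<in> L \<and> c \<in> G ! r} \<and> inj_on fst M \<and> inj_on snd M}"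
  by (rule finite_subset[of _ "{..length G}"]) (auto dest: match_card_le(1))

lemma mcm_set_ne:
  "{card M | M. M \<subseteq> {(r, c). r < length G \<and> c \<in> L \<and> c \<in> G ! r} \<and> inj_on fst M \<and> inj_on snd M} \<noteq> {}"
  by (rule ex_in_conv[THEN iffD1], rule exI[of _ 0], rule CollectI, rule exI[of _ "{}"]) auto

lemma mcm_le_len: "mcm G L \<le> length G"
  unfolding mcm_def using mcm_set_finite mcm_set_ne
  by (subst Max_le_iff) (auto dest: match_card_le(1))

lemma mcm_le_card: "finite L \<Longrightarrow> mcm G L \<le> card L"
  unfolding mcm_def using mcm_set_finite mcm_set_ne
  by (subst Max_le_iff) (auto dest: match_card_le(2))

lemma mcm_ge:
  assumes "R \<subseteq> {..<length G}" "inj_on f R" "\<And>r. r \<in> R \<Longrightarrow> f r \<in> L \<and> f r \<in> G ! r"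
  shows "card R \<le> mcm G L"
proof -
  let ?M = "(\<lambda>r. (r, f r)) ` R"
  have c: "card ?M = card R" by (rule card_image) (auto simp: inj_on_def)
  have "?M \<subseteq> {(r, c). r < length G \<and> c \<in> L \<and> c \<in> G ! r}" using assms by auto
  moreover have "inj_on fst ?M" by (auto simp: inj_on_def)
  moreover have "inj_on snd ?M" using assms(2) by (auto simp: inj_on_def)
  ultimately have "card ?M \<in> {card M | M. M \<subseteq> {(r, c). r < length G \<and> c \<in> L \<and> c \<in> G ! r} \<and> inj_on fst M \<and> inj_on snd M}"
    by blast
  then have "card ?M \<le> mcm G L" unfolding mcm_def using mcm_set_finite by (rule Max_ge[rotated])
  then show ?thesis using c by simp
qed


lemma B_mem: "x \<in> Bl l i \<longleftrightarrow> 1 \<le> x \<and> x \<le> 5*l+3 \<and> x \<notin> I7 l i \<and> x \<noteq> i"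
  by (auto simp: Bl_def Bset_def)

lemma par: obtains y where "x = 2*y" | y where "x = 2*y+(1::nat)"
  by (metis oddE evenE)

lemma L3_sub: assumes "1 \<le> i" "i \<le> 4*l+2" "x \<in> {4*l+3..5*l+3}" shows "x \<in> I7 l i"
  using assms(1,2)
proof (cases rule: I7_LL_cases)
  case 1 show ?thesis unfolding 1(3) using assms(3) by simp
next
  case 2 show ?thesis unfolding 2(3) using assms(3) by simp
next
  case 3 show ?thesis unfolding 3(3) using assms(3) by simp
next
  case 4 show ?thesis unfolding 4(3) using assms(3) by simp
qed

lemma E1_sub:
  assumes "1 \<le> i" "i \<le> 4*l+2" "1 \<le> x" "x \<le> 2*l+1" "even x" "x \<noteq> i"
  shows "x \<in> I7 l i"
  using assms(1,2)
proof (cases rule: I7_LL_cases)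
  case 1 show ?thesis unfolding 1(3) using assms by simp
next
  case 2 show ?thesis unfolding 2(3) using assms by simp
next
  case 3
  have "x \<noteq> i - (2*l+1)"
  proof
    assume "x = i - (2*l+1)"
    then have "i = x + 2*l+1" using 3 by arith
    then show False using 3 assms by simp
  qed
  then show ?thesis unfolding 3(3) using assms by simp
next
  case 4 show ?thesis unfolding 4(3) using assms by simp
qed

lemma O2_sub:
  assumes "1 \<le> i" "i \<le> 4*l+2" "2*l+2 \<le> x" "x \<le> 4*l+2" "odd x" "x \<noteq> i"
  shows "x \<in> I7 l i"
  using assms(1,2)
proof (cases rule: I7_LL_cases)
  case 1
  have "x \<noteq> i + 2*l+1" using 1 assms by auto
  then show ?thesis unfolding 1(3) using assms by simp
next
  case 2 show ?thesis unfolding 2(3) using assms by simp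
next
  case 3 show ?thesis unfolding 3(3) using assms by simp
next
  case 4 show ?thesis unfolding 4(3) using assms by simp
qed
lemma B_a:
  assumes "1 \<le> i" "i \<le> 4*l+2" "x \<in> Bl l i"
  shows "(1 \<le> x \<and> x \<le> 2*l+1 \<and> odd x) \<or> (2*l+2 \<le> x \<and> x \<le> 4*l+2 \<and> even x)"
proof -
  have h: "1 \<le> x" "x \<le> 5*l+3" "x \<notin> I7 l i" "x \<noteq> i" using assms(3) B_mem by blast+
  have "\<not> 4*l+3 \<le> x" using L3_sub[OF assms(1,2), of x] h by auto
  then have x4: "x \<le> 4*l+2" by simp
  have e: "\<not> (even x \<and> x \<le> 2*l+1)" using E1_sub[OF assms(1,2), of x] h by auto
  have o: "\<not> (odd x \<and> 2*l+2 \<le> x)" using O2_sub[OF assms(1,2), of x] h x4 by auto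
  show ?thesis using h(1) x4 e o by auto
qed

lemma B_b:
  assumes "1 \<le> i" "i \<le> 4*l+2" "1 \<le> j" "j \<le> l+1"
  shows "2*j-1 \<in> Bl l i \<or> 2*(l+j) \<in> Bl l i"
  using assms(1,2)
  proof (cases rule: I7_LL_cases)
  case 1 then show ?thesis using assms by - (rule par[of i]; (simp add: B_mem )?; arith?)
  next
  case 2 then show ?thesis using assms by - (rule par[of i]; (simp add: B_mem )?; arith?)
  next
  case 3 then show ?thesis using assms by - (rule par[of i]; (simp add: B_mem )?; arith?)
  next
  case 4 then show ?thesis using assms by - (rule par[of i]; (simp add: B_mem )?; arith?)
  qed

lemma B_c:
  assumes "1 \<le> i" "i \<le> 4*l+2" "1 \<le> j" "j \<le> l+1"
  shows "\<not> (2*j-1 \<in> Bl l i \<and> 2*(l+j) \<in> Bl l i)"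
  using assms(1,2)
  proof (cases rule: I7_LL_cases)
  case 1 then show ?thesis using assms by - (rule par[of i]; (simp add: B_mem )?; arith?)
  next
  case 2 then show ?thesis using assms by - (rule par[of i]; (simp add: B_mem )?; arith?)
  next
  case 3 then show ?thesis using assms by - (rule par[of i]; (simp add: B_mem )?; arith?)
  next
  case 4 then show ?thesis using assms by - (rule par[of i]; (simp add: B_mem )?; arith?)
  qed

lemma row_f1:
  assumes "1 \<le> w" "w \<le> 4*l+2" "1 \<le> i" "i \<le> 2*l+1" "odd i" "i \<noteq> w"
  shows "i \<in> I7 l w \<or> i+2*l+1 \<in> insert w (I7 l w)"
  using assms(1,2)
  proof (cases rule: I7_LL_cases)
  case 1 then show ?thesis using assms by - (rule par[of i]; rule par[of w]; (simp add: B_mem )?; arith?)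
  next
  case 2 then show ?thesis using assms by - (rule par[of i]; rule par[of w]; (simp add: B_mem )?; arith?)
  next
  case 3 then show ?thesis using assms by - (rule par[of i]; rule par[of w]; (simp add: B_mem )?; arith?)
  next
  case 4 then show ?thesis using assms by - (rule par[of i]; rule par[of w]; (simp add: B_mem )?; arith?)
  qed

lemma row_f2:
  assumes "1 \<le> w" "w \<le> 4*l+2" "2*l+2 \<le> i" "i \<le> 4*l+2" "even i" "i \<noteq> w"
  shows "i \<in> I7 l w \<or> i-(2*l+1) \<in> insert w (I7 l w)"
  using assms(1,2)
  proof (cases rule: I7_LL_cases)
  case 1 then show ?thesis using assms by - (rule par[of i]; rule par[of w]; (simp add: B_mem )?; arith?)
  next
  case 2 then show ?thesis using assms by - (rule par[of i]; rule par[of w]; (simp add: B_mem )?; arith?)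
  next
  case 3 then show ?thesis using assms by - (rule par[of i]; rule par[of w]; (simp add: B_mem )?; arith?)
  next
  case 4 then show ?thesis using assms by - (rule par[of i]; rule par[of w]; (simp add: B_mem )?; arith?)
  qed

lemma row_f3:
  assumes "1 \<le> w" "w \<le> 4*l+2" "1 \<le> i" "i \<le> 4*l+2" "(even i \<and> i \<le> 2*l+1) \<or> (odd i \<and> 2*l+2 \<le> i)" "i \<noteq> w"
  shows "i \<in> I7 l w"
  using assms(1,2)
  proof (cases rule: I7_LL_cases)
  case 1 then show ?thesis using assms by - (rule par[of i]; rule par[of w]; (simp add: B_mem )?; arith?)
  next
  case 2 then show ?thesis using assms by - (rule par[of i]; rule par[of w]; (simp add: B_mem )?; arith?)
  next
  case 3 then show ?thesis using assms by - (rule par[of i]; rule par[of w]; (simp add: B_mem )?; arith?)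
  next
  case 4 then show ?thesis using assms by - (rule par[of i]; rule par[of w]; (simp add: B_mem )?; arith?)
  qed

lemma I7_fin: "finite (I7 l i)"
  by (simp add: I7_def Let_def)

lemma card_L3: "4*l+3 \<le> u \<Longrightarrow> u \<le> 5*l+3 \<Longrightarrow> card (I7 l u) = 2"
  by (simp add: I7_L3)

lemma card_LL:
  assumes "1 \<le> l" "1 \<le> w" "w \<le> 4*l+2"
  shows "3 \<le> card (I7 l w)"
proof -
  have "{4*l+3, 4*l+4, if even w \<and> w \<le> 2*l+1 then 1 else if even w then 2*l+3 else 2} \<subseteq> I7 l w"
    using assms(2,3)
  proof (cases rule: I7_LL_cases)
  case 1 then show ?thesis using assms by - (rule par[of w]; (simp add: B_mem )?; arith?)
  next
  case 2 then show ?thesis using assms by - (rule par[of w]; (simp add: B_mem )?; arith?)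
  next
  case 3 then show ?thesis using assms by - (rule par[of w]; (simp add: B_mem )?; arith?)
  next
  case 4 then show ?thesis using assms by - (rule par[of w]; (simp add: B_mem )?; arith?)
  qed
  from card_mono[OF I7_fin this] show ?thesis using assms(1) by (simp split: if_splits)
qed

definition "row l v = insert v (I7 l v)"
definition "col l i u = (if 4*l+3 \<le> i then u else if 2*(u-4*l-2)-1 \<in> Bl l i then 2*(u-4*l-2)-1 else 2*(u-3*l-2))"

lemma row_L3: "4*l+3 \<le> u \<Longrightarrow> u \<le> 5*l+3 \<Longrightarrow> row l u = {u, 2*(u-4*l-2)-1, 2*(u-3*l-2)}"
  by (simp add: row_def I7_L3)

lemma col_in_row: "4*l+3 \<le> u \<Longrightarrow> u \<le> 5*l+3 \<Longrightarrow> col l i u \<in> row l u"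
  by (simp add: row_L3 col_def)

lemma col_in_B:
  assumes "4*l+3 \<le> u" "u \<le> 5*l+3" "1 \<le> i" "i \<le> 5*l+3" "u \<noteq> i"
  shows "col l i u \<in> Bl l i"
proof (cases "4*l+3 \<le> i")
  case True
  then show ?thesis using assms by (simp add: col_def B_mem I7_L3; arith)
next
  case False
  then have i: "i \<le> 4*l+2" by simp
  have e1: "2*(u-4*l-2)-1 = 2*(u-(4*l+2))-1" and e2: "2*(u-3*l-2) = 2*(l+(u-(4*l+2)))" using assms(1) by arith+
  have "2*(u-(4*l+2))-1 \<in> Bl l i \<or> 2*(l+(u-(4*l+2))) \<in> Bl l i"
    by (rule B_b) (use assms i in arith)+
  then show ?thesis using False unfolding col_def e1 e2 by auto
qed

lemma col_inj:
  assumes "4*l+3 \<le> u" "u \<le> 5*l+3" "4*l+3 \<le> u'" "u' \<le> 5*l+3" "col l i u = col l i u'"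
  shows "u = u'"
  using assms unfolding col_def by (auto split: if_splits)

lemma P1:
  assumes "distinct ws" "set ws \<subseteq> {4*l+3..5*l+3}" "1 \<le> i" "i \<le> 5*l+3" "i \<notin> set ws"
  shows "mcm (map (row l) ws) (insert i (Bl l i)) \<noteq> mcm (map (row l) ws) (Bl l i) + 1"
proof -
  let ?G = "map (row l) ws"
  have "card {..<length ws} \<le> mcm ?G (Bl l i)"
  proof (rule mcm_ge[where f = "\<lambda>r. col l i (ws ! r)"])
    show "{..<length ws} \<subseteq> {..<length ?G}" by simp
    show "inj_on (\<lambda>r. col l i (ws ! r)) {..<length ws}"
    proof (rule inj_onI)
      fix r r' assume r: "r \<in> {..<length ws}" "r' \<in> {..<length ws}" "col l i (ws ! r) = col l i (ws ! r')"
      have "ws ! r \<in> {4*l+3..5*l+3}" "ws ! r' \<in> {4*l+3..5*l+3}" using r assms(2) nth_mem by blast+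
      then have "ws ! r = ws ! r'" using col_inj r(3) by auto
      then show "r = r'" using r assms(1) nth_eq_iff_index_eq by auto
    qed
    fix r assume r: "r \<in> {..<length ws}"
    have u: "ws ! r \<in> {4*l+3..5*l+3}" "ws ! r \<noteq> i" using r assms(2,5) nth_mem by blast+
    show "col l i (ws ! r) \<in> Bl l i \<and> col l i (ws ! r) \<in> ?G ! r"
      using u r col_in_B[of l "ws ! r" i] col_in_row[of l "ws ! r" i] assms(3,4) by auto
  qed
  moreover have "mcm ?G (insert i (Bl l i)) \<le> length ws" using mcm_le_len[of ?G] by simp
  ultimately show ?thesis by simp
qed

lemma B_fin: "finite (Bl l i)"
  by (rule finite_subset[of _ "{1..5*l+3}"]) (auto simp: B_mem)

lemma i_notin_B: "i \<notin> Bl l i"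
  by (simp add: B_mem)

lemma Bsub:
  assumes "1 \<le> i" "i \<le> 4*l+2"
  shows "Bl l i \<subseteq> col l i ` {4*l+3..5*l+3}"
proof
  fix x assume x: "x \<in> Bl l i"
  from B_a[OF assms x] show "x \<in> col l i ` {4*l+3..5*l+3}"
  proof
    assume h: "1 \<le> x \<and> x \<le> 2*l+1 \<and> odd x"
    then obtain a where a: "x = 2*a+1" by (meson oddE)
    let ?u = "4*l+3+a"
    have p: "2*(?u-4*l-2)-1 = x" using a by simp
    have "col l i ?u = x" using assms x unfolding col_def p by simp
    moreover have "?u \<in> {4*l+3..5*l+3}" using h a by simp
    ultimately show ?thesis by (metis image_eqI)
  next
    assume h: "2*l+2 \<le> x \<and> x \<le> 4*l+2 \<and> even x"
    then obtain a where a: "x = 2*a" by (meson evenE)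
    let ?u = "3*l+2+a"
    have q: "2*(?u-3*l-2) = x" using a by simp
    have p: "2*(?u-4*l-2)-1 = 2*(a-l)-1" by simp
    have "\<not> (2*(a-l)-1 \<in> Bl l i \<and> 2*(l+(a-l)) \<in> Bl l i)"
      by (rule B_c) (use assms h a in arith)+
    moreover have "2*(l+(a-l)) = x" using h a by simp
    ultimately have "2*(?u-4*l-2)-1 \<notin> Bl l i" using x p by simp
    then have "col l i ?u = x" using assms x q unfolding col_def by simp
    moreover have "?u \<in> {4*l+3..5*l+3}" using h a by simp
    ultimately show ?thesis by (metis image_eqI)
  qed
qed

lemma cardB:
  assumes "1 \<le> i" "i \<le> 4*l+2"
  shows "card (Bl l i) \<le> l+1"
proof -
  have "card (Bl l i) \<le> card (col l i ` {4*l+3..5*l+3})"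
    by (rule card_mono[OF _ Bsub[OF assms]]) simp
  also have "\<dots> \<le> card {4*l+3..5*l+3}" by (rule card_image_le) simp
  finally show ?thesis by simp
qed

lemma P2:
  assumes "distinct ws" "set ws = {4*l+3..5*l+3}" "1 \<le> w" "w \<le> 4*l+2" "1 \<le> i" "i \<le> 4*l+2" "i \<noteq> w"
  shows "mcm (map (row l) ws @ [row l w]) (insert i (Bl l i)) = mcm (map (row l) ws @ [row l w]) (Bl l i) + 1"
proof -
  let ?G = "map (row l) ws @ [row l w]"
  let ?n = "length ws"
  have len: "?n = l+1" using distinct_card[OF assms(1)] assms(2) by simp
  have Gr: "\<And>r. r < ?n \<Longrightarrow> ?G ! r = row l (ws!r)" by (simp add: nth_append)
  have Gw: "?G ! ?n = row l w" by (metis length_map nth_append_length)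
  have lenG: "length ?G = l+2" using len by simp
  have inL3: "\<And>r. r < ?n \<Longrightarrow> ws!r \<in> {4*l+3..5*l+3}" using assms(2) nth_mem by blast
  have colB: "\<And>u. u \<in> {4*l+3..5*l+3} \<Longrightarrow> col l i u \<in> Bl l i"
    using col_in_B assms(5,6) by auto
  have colR: "\<And>r. r < ?n \<Longrightarrow> col l i (ws!r) \<in> Bl l i \<and> col l i (ws!r) \<in> ?G ! r"
    using inL3 colB Gr col_in_row by auto
  have colinj: "\<And>r r'. r < ?n \<Longrightarrow> r' < ?n \<Longrightarrow> col l i (ws!r) = col l i (ws!r') \<Longrightarrow> r = r'"
  proof -
    fix r r' assume r: "r < ?n" "r' < ?n" "col l i (ws!r) = col l i (ws!r')"
    then have "ws ! r = ws ! r'" using col_inj inL3 by (meson atLeastAtMost_iff)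
    then show "r = r'" using r assms(1) nth_eq_iff_index_eq by auto
  qed
  have lb: "?n \<le> mcm ?G (Bl l i)"
    using mcm_ge[of "{..<?n}" ?G "\<lambda>r. col l i (ws!r)" "Bl l i"] colR colinj
    by (auto simp: inj_on_def)
  have ub: "mcm ?G (Bl l i) \<le> l+1"
    using mcm_le_card[OF B_fin, of ?G l i] cardB[OF assms(5,6)] by simp
  have top: "mcm ?G (insert i (Bl l i)) \<le> l+2" using mcm_le_len[of ?G] lenG by simp
  have iB: "i \<notin> Bl l i" by (rule i_notin_B)
  have cne: "\<And>r. r < ?n \<Longrightarrow> col l i (ws!r) \<noteq> i" using colR iB by metis
  have cne2: "\<And>r. r < ?n \<Longrightarrow> i \<noteq> col l i (ws!r)" using colR iB by metis
  have lb2: "?n + 1 \<le> mcm ?G (insert i (Bl l i))"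
  proof (cases "i \<in> I7 l w")
    case True
    let ?f = "\<lambda>r. if r < ?n then col l i (ws!r) else i"
    have "card {..<Suc ?n} \<le> mcm ?G (insert i (Bl l i))"
    proof (rule mcm_ge[where f = ?f])
      show "{..<Suc ?n} \<subseteq> {..<length ?G}" by simp
      show "inj_on ?f {..<Suc ?n}"
        using colinj cne cne2 by (auto simp: inj_on_def) 
      fix r assume "r \<in> {..<Suc ?n}"
      then show "?f r \<in> insert i (Bl l i) \<and> ?f r \<in> ?G ! r"
        using colR True Gw by (auto simp: row_def less_Suc_eq)
    qed
    then show ?thesis by simp
  next
    case False
    have "\<exists>u0 \<in> {4*l+3..5*l+3}. i \<in> row l u0 \<and> col l i u0 \<in> row l w"
    proof (cases "odd i \<and> i \<le> 2*l+1")
      case True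
      then obtain a where a: "i = 2*a+1" by (meson oddE)
      let ?u = "4*l+3+a"
      have u: "?u \<in> {4*l+3..5*l+3}" using True a by simp
      have p: "2*(?u-4*l-2)-1 = i" "2*(?u-3*l-2) = i+2*l+1" using a by simp_all
      have "i+2*l+1 \<in> row l w" using row_f1[of w l i] True assms False by (simp add: row_def)
      moreover have "col l i ?u = i+2*l+1" using iB assms(6) unfolding col_def p by simp
      moreover have "i \<in> row l ?u" using u p row_L3[of l ?u] by simp
      ultimately show ?thesis using u by metis
    next
      case F2: False
      show ?thesis
      proof (cases "even i \<and> 2*l+2 \<le> i")
        case True
        then obtain a where a: "i = 2*a" by (meson evenE)
        let ?u = "3*l+2+a"
        have u: "?u \<in> {4*l+3..5*l+3}" using True a assms(6) by simp
        have p: "2*(?u-4*l-2)-1 = i-(2*l+1)" "2*(?u-3*l-2) = i" using a True by simp_all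
        have "i-(2*l+1) \<in> row l w" using row_f2[of w l i] True assms False by (simp add: row_def)
        moreover have "2*(?u-4*l-2)-1 \<in> Bl l i"
          using colB[OF u] iB assms(6) unfolding col_def p by (simp split: if_splits)
        then have "col l i ?u = i-(2*l+1)" using assms(6) unfolding col_def p by simp
        moreover have "i \<in> row l ?u" using u p row_L3[of l ?u] by simp
        ultimately show ?thesis using u by metis
      next
        case False
        then have "i \<in> I7 l w" using row_f3[of w l i] F2 assms by auto
        then show ?thesis using \<open>i \<notin> I7 l w\<close> by simp
      qed
    qed
    then obtain u0 where u0: "u0 \<in> {4*l+3..5*l+3}" "i \<in> row l u0" "col l i u0 \<in> row l w" by blast
    then obtain r0 where r0: "r0 < ?n" "ws ! r0 = u0" using assms(2) by (metis in_set_conv_nth)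
    let ?f = "\<lambda>r. if r = r0 then i else if r < ?n then col l i (ws!r) else col l i u0"
    have "card {..<Suc ?n} \<le> mcm ?G (insert i (Bl l i))"
    proof (rule mcm_ge[where f = ?f])
      show "{..<Suc ?n} \<subseteq> {..<length ?G}" by simp
      show "inj_on ?f {..<Suc ?n}"
      proof (rule inj_onI)
        fix r r' assume rr: "r \<in> {..<Suc ?n}" "r' \<in> {..<Suc ?n}" "?f r = ?f r'"
        have c0: "col l i u0 = col l i (ws!r0)" using r0 by simp
        have A: "\<And>a b. a < Suc ?n \<Longrightarrow> b < Suc ?n \<Longrightarrow> ?f a = ?f b \<Longrightarrow> a = r0 \<Longrightarrow> a = b"
        proof -
          fix a b assume ab: "a < Suc ?n" "b < Suc ?n" "?f a = ?f b" "a = r0"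
          show "a = b"
          proof (rule ccontr)
            assume "a \<noteq> b"
            then have "?f b \<noteq> i" using ab cne cne2 c0 r0(1) by (cases "b < ?n") auto
            then show False using ab by simp
          qed
        qed
        have B: "\<And>a b. a < Suc ?n \<Longrightarrow> b < Suc ?n \<Longrightarrow> ?f a = ?f b \<Longrightarrow> a \<noteq> r0 \<Longrightarrow> b \<noteq> r0 \<Longrightarrow> a = b"
        proof -
          fix a b assume ab: "a < Suc ?n" "b < Suc ?n" "?f a = ?f b" "a \<noteq> r0" "b \<noteq> r0"
          define a' where "a' = (if a < ?n then a else r0)"
          define b' where "b' = (if b < ?n then b else r0)"
          have fa: "?f a = col l i (ws!a')" using ab(4) c0 unfolding a'_def by simp
          have fb: "?f b = col l i (ws!b')" using ab(5) c0 unfolding b'_def by simp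
          have "a' < ?n" "b' < ?n" using ab r0 unfolding a'_def b'_def by auto
          then have "a' = b'" using colinj fa fb ab(3) by metis
          then show "a = b" using ab unfolding a'_def b'_def by (auto split: if_splits)
        qed
        show "r = r'"
        proof (cases "r = r0")
          case True then show ?thesis using A rr by auto
        next
          case False
          show ?thesis
          proof (cases "r' = r0")
            case True then show ?thesis using A[of r' r] rr by auto
          next
            case False
            then show ?thesis using B rr \<open>r \<noteq> r0\<close> by auto
          qed
        qed
      qed
      fix r assume "r \<in> {..<Suc ?n}"
      then show "?f r \<in> insert i (Bl l i) \<and> ?f r \<in> ?G ! r"
        using colR Gw Gr[of r0] r0 u0 colB by (auto simp: less_Suc_eq)
    qed
    then show ?thesis by simp
  qed
  show ?thesis using lb ub lb2 top len by simp
qed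

definition Reach :: "nat \<Rightarrow> nat set \<times> nat set list \<Rightarrow> bool" where
  "Reach l s \<longleftrightarrow> (\<exists>ws. distinct ws \<and> set ws \<subseteq> {4*l+3..5*l+3} \<and> s = ({1..5*l+3} - set ws, map (row l) ws))
     \<or> (\<exists>ws w. distinct ws \<and> set ws = {4*l+3..5*l+3} \<and> 1 \<le> w \<and> w \<le> 4*l+2 \<and> s = ({}, map (row l) ws @ [row l w]))"

lemma Bset_Bl: "Bset (5*l+3) (I7 l) i = Bl l i"
  by (simp add: Bl_def)

lemma filter1:
  assumes "distinct ws" "set ws \<subseteq> {4*l+3..5*l+3}" "v \<in> {4*l+3..5*l+3}" "v \<notin> set ws"
  shows "{i \<in> ({1..5*l+3} - set ws) - {v}. mcm (map (row l) ws @ [insert v (I7 l v)]) (insert i (Bset (5*l+3) (I7 l) i))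
            \<noteq> mcm (map (row l) ws @ [insert v (I7 l v)]) (Bset (5*l+3) (I7 l) i) + 1} = ({1..5*l+3} - set ws) - {v}"
proof -
  have G: "map (row l) ws @ [insert v (I7 l v)] = map (row l) (ws @ [v])" by (simp add: row_def)
  have "\<And>i. i \<in> ({1..5*l+3} - set ws) - {v} \<Longrightarrow>
     mcm (map (row l) (ws @ [v])) (insert i (Bl l i)) \<noteq> mcm (map (row l) (ws @ [v])) (Bl l i) + 1"
    by (rule P1) (use assms in auto)
  then show ?thesis unfolding G Bset_Bl by blast
qed

lemma L12: "set (ws::nat list) = {4*l+3..5*l+3} \<Longrightarrow> {1..5*l+3} - set ws = {1..4*l+2}"
  by auto

lemma filter2:
  assumes "distinct ws" "set ws = {4*l+3..5*l+3}" "1 \<le> w" "w \<le> 4*l+2"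
  shows "{i \<in> ({1..5*l+3} - set ws) - {w}. mcm (map (row l) ws @ [insert w (I7 l w)]) (insert i (Bset (5*l+3) (I7 l) i))
            \<noteq> mcm (map (row l) ws @ [insert w (I7 l w)]) (Bset (5*l+3) (I7 l) i) + 1} = {}"
proof -
  have G: "map (row l) ws @ [insert w (I7 l w)] = map (row l) ws @ [row l w]" by (simp add: row_def)
  have "\<And>i. i \<in> {1..4*l+2} - {w} \<Longrightarrow>
     mcm (map (row l) ws @ [row l w]) (insert i (Bl l i)) = mcm (map (row l) ws @ [row l w]) (Bl l i) + 1"
    by (rule P2) (use assms in auto)
  then show ?thesis unfolding G Bset_Bl L12[OF assms(2)] by blast
qed

lemma card_A_L3: "u \<in> {4*l+3..5*l+3} \<Longrightarrow> card (I7 l u) = 2"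
  using card_L3 by auto

lemma step_Reach:
  assumes l: "1 \<le> l" and R: "Reach l s" and st: "umcd_step (5*l+3) (I7 l) s s'"
  shows "Reach l s'"
proof -
  obtain N G w where s: "s = (N, G)" and Nne: "N \<noteq> {}" and wN: "w \<in> N"
    and wmin: "\<forall>v\<in>N. card (I7 l w) \<le> card (I7 l v)"
    and s': "s' = ({i \<in> N - {w}. mcm (G @ [insert w (I7 l w)]) (insert i (Bset (5*l+3) (I7 l) i))
                           \<noteq> mcm (G @ [insert w (I7 l w)]) (Bset (5*l+3) (I7 l) i) + 1},
            G @ [insert w (I7 l w)])"
    using st unfolding umcd_step_def by blast
  from R Nne s obtain ws where ws: "distinct ws" "set ws \<subseteq> {4*l+3..5*l+3}" "N = {1..5*l+3} - set ws" "G = map (row l) ws"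
    unfolding Reach_def by auto
  show ?thesis
  proof (cases "set ws = {4*l+3..5*l+3}")
    case True
    have w: "1 \<le> w" "w \<le> 4*l+2" using wN ws(3) L12[OF True] by auto
    have "s' = ({}, map (row l) ws @ [row l w])"
      using s' filter2[OF ws(1) True w] ws(3,4) by (simp add: row_def)
    then show ?thesis unfolding Reach_def using ws(1) True w by blast
  next
    case False
    then obtain v where v: "v \<in> {4*l+3..5*l+3}" "v \<notin> set ws" using ws(2) by blast
    have vN: "v \<in> N" using v ws(3) by auto
    have "card (I7 l w) \<le> 2" using wmin vN card_A_L3[OF v(1)] by auto
    moreover have "w \<ge> 1" "w \<le> 5*l+3" "w \<notin> set ws" using wN ws(3) by auto
    ultimately have w: "w \<in> {4*l+3..5*l+3}" using card_LL[OF l, of w] by (cases "w \<le> 4*l+2") auto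
    have "s' = ({1..5*l+3} - set (ws @ [w]), map (row l) (ws @ [w]))"
      using s' filter1[OF ws(1,2) w \<open>w \<notin> set ws\<close>] ws(3,4) by (auto simp: row_def)
    moreover have "distinct (ws @ [w])" "set (ws @ [w]) \<subseteq> {4*l+3..5*l+3}" using ws w \<open>w \<notin> set ws\<close> by auto
    ultimately show ?thesis unfolding Reach_def by blast
  qed
qed

lemma Reach_star:
  assumes "1 \<le> l" "(umcd_step (5*l+3) (I7 l))\<^sup>*\<^sup>* s t" "Reach l s"
  shows "Reach l t"
  using assms(2,3) by (induction rule: rtranclp_induct) (use step_Reach assms(1) in blast)+

lemma Reach_final:
  assumes "Reach l ({}, G)"
  shows "length G = l + 2"
proof -
  have "\<not> (\<exists>ws. set ws \<subseteq> {4*l+3..5*l+3} \<and> {} = {1..5*l+3} - set ws)"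
  proof
    assume "\<exists>ws. set ws \<subseteq> {4*l+3..5*l+3} \<and> {} = {1..5*l+3} - set ws"
    then obtain ws where "set ws \<subseteq> {4*l+3..5*l+3}" "{} = {1..5*l+3} - set ws" by blast
    then have "{1..5*l+3} \<subseteq> set ws" "set ws \<subseteq> {4*l+3..5*l+3}" by blast+
    moreover have "(1::nat) \<in> {1..5*l+3}" by simp
    ultimately have "(1::nat) \<in> {4*l+3..5*l+3}" by blast
    then show False by simp
  qed
  then obtain ws w where "distinct ws" "set ws = {4*l+3..5*l+3}" "G = map (row l) ws @ [row l w]"
    using assms unfolding Reach_def by blast
  then show ?thesis using distinct_card[of ws] by simp
qed

lemma run_phase1:
  assumes "1 \<le> l" "n \<le> l+1"
  shows "(umcd_step (5*l+3) (I7 l))\<^sup>*\<^sup>* ({1..5*l+3}, []) ({1..5*l+3} - set [4*l+3..<4*l+3+n], map (row l) [4*l+3..<4*l+3+n])"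
  using assms(2)
proof (induction n)
  case 0
  then show ?case by simp
next
  case (Suc n)
  let ?ws = "[4*l+3..<4*l+3+n]"
  let ?v = "4*l+3+n"
  have v: "?v \<in> {4*l+3..5*l+3}" "?v \<notin> set ?ws" using Suc.prems by auto
  have ws: "distinct ?ws" "set ?ws \<subseteq> {4*l+3..5*l+3}" using Suc.prems by auto
  let ?N = "{1..5*l+3} - set ?ws"
  have vN: "?v \<in> ?N" using v by auto
  have min: "\<forall>x\<in>?N. card (I7 l ?v) \<le> card (I7 l x)"
  proof
    fix x assume x: "x \<in> ?N"
    show "card (I7 l ?v) \<le> card (I7 l x)"
    proof (cases "x \<le> 4*l+2")
      case True
      then show ?thesis using card_LL[OF assms(1), of x] card_A_L3[OF v(1)] x by auto
    next
      case False
      then show ?thesis using card_A_L3[OF v(1)] card_A_L3[of x l] x by auto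
    qed
  qed
  have st: "umcd_step (5*l+3) (I7 l) (?N, map (row l) ?ws) (?N - {?v}, map (row l) ?ws @ [insert ?v (I7 l ?v)])"
    unfolding umcd_step_def
    apply (rule exI[of _ ?N], rule exI[of _ "map (row l) ?ws"], rule exI[of _ ?v])
    apply (intro conjI)
        apply (rule refl)
    using vN apply blast
    using vN apply blast
    using min apply blast
    apply (simp only: filter1[OF ws v])
    done
  have e2: "[4*l+3..<4*l+3+Suc n] = ?ws @ [?v]" by (simp only: add_Suc_right upt_Suc) simp
  have e1: "?N - {?v} = {1..5*l+3} - set [4*l+3..<4*l+3+Suc n]" unfolding e2 by auto
  have e3: "map (row l) ?ws @ [insert ?v (I7 l ?v)] = map (row l) [4*l+3..<4*l+3+Suc n]"
    unfolding e2 by (simp add: row_def)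
  have IH: "(umcd_step (5*l+3) (I7 l))\<^sup>*\<^sup>* ({1..5*l+3}, []) (?N, map (row l) ?ws)"
    using Suc.IH Suc.prems by simp
  note X0 = rtranclp.rtrancl_into_rtrancl[of "umcd_step (5*l+3) (I7 l)" "({1..5*l+3}, [])" "(?N, map (row l) ?ws)"]
  note X1 = X0[OF IH]
  note X = X1[OF st]
  show ?case using X unfolding e1 e3 .
qed

theorem proposition18:
  fixes l :: nat
  assumes "l \<ge> 1"
  shows "umcd_output (5*l+3) (I7 l) k \<longleftrightarrow> k = l + 2"
proof
  assume "umcd_output (5*l+3) (I7 l) k"
  then obtain G where G: "(umcd_step (5*l+3) (I7 l))\<^sup>*\<^sup>* ({1..5*l+3}, []) ({}, G)" "length G = k"
    unfolding umcd_output_def by blast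
  have "Reach l ({1..5*l+3}, [])" unfolding Reach_def by (rule disjI1, rule exI[of _ "[]"]) simp
  then have "Reach l ({}, G)" using Reach_star[OF assms G(1)] by blast
  then show "k = l + 2" using Reach_final G(2) by simp
next
  assume k: "k = l + 2"
  let ?ws = "[4*l+3..<4*l+3+(l+1)]"
  have r1: "(umcd_step (5*l+3) (I7 l))\<^sup>*\<^sup>* ({1..5*l+3}, []) ({1..5*l+3} - set ?ws, map (row l) ?ws)"
    using run_phase1[OF assms, of "l+1"] by simp
  have ws: "distinct ?ws" "set ?ws = {4*l+3..5*l+3}" by auto
  let ?N = "{1..5*l+3} - set ?ws"
  have N: "?N = {1..4*l+2}" using L12[OF ws(2)] .
  have fin: "finite ((\<lambda>x. card (I7 l x)) ` ?N)" by simp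
  have ne: "(\<lambda>x. card (I7 l x)) ` ?N \<noteq> {}" using N by auto
  have "Min ((\<lambda>x. card (I7 l x)) ` ?N) \<in> (\<lambda>x. card (I7 l x)) ` ?N" by (rule Min_in[OF fin ne])
  then obtain w where wN: "w \<in> ?N" and wc: "Min ((\<lambda>x. card (I7 l x)) ` ?N) = card (I7 l w)"
    by blast
  have min: "\<forall>v\<in>?N. card (I7 l w) \<le> card (I7 l v)"
  proof
    fix v assume "v \<in> ?N"
    then have "Min ((\<lambda>x. card (I7 l x)) ` ?N) \<le> card (I7 l v)" by (intro Min_le[OF fin] imageI)
    then show "card (I7 l w) \<le> card (I7 l v)" using wc by simp
  qed
  have w: "1 \<le> w" "w \<le> 4*l+2" using wN N by auto
  have st2: "umcd_step (5*l+3) (I7 l) (?N, map (row l) ?ws) ({}, map (row l) ?ws @ [insert w (I7 l w)])"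
    unfolding umcd_step_def
    apply (rule exI[of _ ?N], rule exI[of _ "map (row l) ?ws"], rule exI[of _ w])
    apply (intro conjI)
        apply (rule refl)
    using wN apply blast
    using wN apply blast
    using min apply blast
    apply (simp only: filter2[OF ws w])
    done
  note X0 = rtranclp.rtrancl_into_rtrancl[of "umcd_step (5*l+3) (I7 l)" "({1..5*l+3}, [])" "(?N, map (row l) ?ws)"]
  note X1 = X0[OF r1]
  note X = X1[OF st2]
  have "(umcd_step (5*l+3) (I7 l))\<^sup>*\<^sup>* ({1..5*l+3}, []) ({}, map (row l) ?ws @ [insert w (I7 l w)])"
    by (rule X)
  moreover have "length (map (row l) ?ws @ [insert w (I7 l w)]) = k" using k by simp
  ultimately show "umcd_output (5*l+3) (I7 l) k" unfolding umcd_output_def by blast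
qed

end
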